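(* Let $r\ge4$ be even and $n=r+2$. For $i=1,\dots,4$ let $a_i,g_i:\mathbb F_2^r\to\mathbb F_2$ and define $\mathfrak f_i:\mathbb F_2^r\times\mathbb F_2^2\to\mathbb F_2$ by $\mathfrak f_i(x,y)=a_i(x)\oplus(g_i(x)\oplus y_1)(g_i(x)\oplus y_2)$. Assume that each $a_i$ is bent with $a_1^*\oplus a_2^*\oplus a_3^*\oplus a_4^*=1$ on $\mathbb F_2^r$, and that $a_1\oplus g_1,\dots,a_4\oplus g_4$ are semi-bent functions with pairwise disjoint Walsh supports. Then each $\mathfrak f_i$ satisfies $W_{\mathfrak f_i}(w)\in\{0,\pm2^{n/2},\pm2^{(n+2)/2}\}$ for all $w\in\mathbb F_2^n$, and: (a) the sets $S^{[1]}_{\mathfrak f_i}=\{w\in\mathbb F_2^n:|W_{\mathfrak f_i}(w)|=2^{(n+2)/2}\}$, $i=1,\dots,4$, are pairwise disjoint; (b) the sets $S^{[2]}_{\mathfrak f_i}=\{w\in\mathbb F_2^n:|W_{\mathfrak f_i}(w)|=2^{n/2}\}$ are all equal to a common set $S$, and the functions $\mathfrak f^*_{[2],i}:S\to\mathbb F_2$ defined by $W_{\mathfrak f_i}(w)=2^{n/2}(-1)^{\mathfrak f^*_{[2],i}(w)}$ satisfy $\mathfrak f^*_{[2],1}\oplus\mathfrak f^*_{[2],2}\oplus\mathfrak f^*_{[2],3}\oplus\mathfrak f^*_{[2],4}=1$ on $S$.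
   Context: $W_f(\omega)=\sum_x(-1)^{f(x)\oplus\omega\cdot x}$, Walsh support $S_f=\{\omega:W_f(\omega)\ne0\}$. For even $r$, $a$ is bent if $|W_a(u)|=2^{r/2}$ for all $u$, with dual $a^*$ defined by $W_a(u)=2^{r/2}(-1)^{a^*(u)}$; $a$ is semi-bent if $W_a(u)\in\{0,\pm2^{(r+2)/2}\}$ for all $u$. *)

theory Defs
  imports Main
begin

text \<open>The vector space F_2^m is modelled as the set of boolean lists of length m;
  F_2 is bool with xor = (\<noteq>) and multiplication = (\<and>).\<close>

definition vecs :: "nat \<Rightarrow> bool list set" where
  "vecs m = {xs. length xs = m}"

definition dotp :: "bool list \<Rightarrow> bool list \<Rightarrow> bool" where
  "dotp u x = odd (card {i. i < length u \<and> i < length x \<and> u ! i \<and> x ! i})"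

definition walsh :: "nat \<Rightarrow> (bool list \<Rightarrow> bool) \<Rightarrow> bool list \<Rightarrow> int" where
  "walsh m f w = (\<Sum>x\<in>vecs m. (-1::int) ^ (if f x \<noteq> dotp w x then 1 else 0))"

definition wsupp :: "nat \<Rightarrow> (bool list \<Rightarrow> bool) \<Rightarrow> bool list set" where
  "wsupp m f = {w \<in> vecs m. walsh m f w \<noteq> 0}"

definition bent :: "nat \<Rightarrow> (bool list \<Rightarrow> bool) \<Rightarrow> bool" where
  "bent m f \<longleftrightarrow> (\<forall>u\<in>vecs m. \<bar>walsh m f u\<bar> = 2 ^ (m div 2))"

text \<open>Dual of a bent function: W_f(u) = 2^(m/2) (-1)^(f*(u)), i.e. f*(u) = 1 iff W_f(u) < 0.\<close>
definition bent_dual :: "nat \<Rightarrow> (bool list \<Rightarrow> bool) \<Rightarrow> bool list \<Rightarrow> bool" where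
  "bent_dual m f u \<longleftrightarrow> walsh m f u = - (2 ^ (m div 2))"

definition semibent :: "nat \<Rightarrow> (bool list \<Rightarrow> bool) \<Rightarrow> bool" where
  "semibent m f \<longleftrightarrow> (\<forall>u\<in>vecs m. walsh m f u \<in> {0, 2 ^ ((m + 2) div 2), - (2 ^ ((m + 2) div 2))})"

text \<open>frak f(x,y) = a(x) xor (g(x) xor y1)(g(x) xor y2), on F_2^r x F_2^2 identified
  with F_2^(r+2) via concatenation z = x @ [y1, y2].\<close>
definition frakf :: "nat \<Rightarrow> (bool list \<Rightarrow> bool) \<Rightarrow> (bool list \<Rightarrow> bool) \<Rightarrow> bool list \<Rightarrow> bool" where
  "frakf r a g z = (a (take r z) \<noteq> ((g (take r z) \<noteq> z ! r) \<and> (g (take r z) \<noteq> z ! (r + 1))))"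

definition S1 :: "nat \<Rightarrow> (bool list \<Rightarrow> bool) \<Rightarrow> bool list set" where
  "S1 n f = {w \<in> vecs n. \<bar>walsh n f w\<bar> = 2 ^ ((n + 2) div 2)}"

definition S2 :: "nat \<Rightarrow> (bool list \<Rightarrow> bool) \<Rightarrow> bool list set" where
  "S2 n f = {w \<in> vecs n. \<bar>walsh n f w\<bar> = 2 ^ (n div 2)}"

text \<open>f*_[2](w), defined on S^[2] by W_f(w) = 2^(n/2) (-1)^(f*_[2](w)).\<close>
definition dual2 :: "nat \<Rightarrow> (bool list \<Rightarrow> bool) \<Rightarrow> bool list \<Rightarrow> bool" where
  "dual2 n f w \<longleftrightarrow> walsh n f w = - (2 ^ (n div 2))"

end

theory Submission
  imports Defs
begin

lemma dotp_Nil[simp]: "dotp [] x = False" "dotp u [] = False"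
  by (auto simp: dotp_def)

lemma dotp_Cons: "dotp (a#u) (b#x) = ((a \<and> b) \<noteq> dotp u x)"
proof -
  let ?B = "{i. i < length u \<and> i < length x \<and> u ! i \<and> x ! i}"
  have eq: "{i. i < length (a#u) \<and> i < length (b#x) \<and> (a#u) ! i \<and> (b#x) ! i}
       = (if a \<and> b then {0} else {}) \<union> Suc ` ?B"
  proof (rule set_eqI)
    fix i show "i \<in> {i. i < length (a#u) \<and> i < length (b#x) \<and> (a#u) ! i \<and> (b#x) ! i} \<longleftrightarrow> i \<in> (if a \<and> b then {0} else {}) \<union> Suc ` ?B"
      by (cases i) auto
  qed
  have fin: "finite ?B" by auto
  have "card ((if a \<and> b then {0} else {}) \<union> Suc ` ?B) = (if a \<and> b then 1 else 0) + card ?B"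
    using fin by (auto simp: card_image)
  then show ?thesis unfolding dotp_def eq by auto
qed
lemma dotp_append: "length u = length x \<Longrightarrow> dotp (u @ u') (x @ x') = (dotp u x \<noteq> dotp u' x')"
proof (induction u arbitrary: x)
  case Nil thus ?case by simp
next
  case (Cons c u) then obtain b x0 where "x = b # x0" "length u = length x0"
    by (cases x) auto
  thus ?case using Cons.IH[of x0] by (auto simp: dotp_Cons)
qed

lemma dotp_two: "dotp [v1,v2] [y1,y2] = ((v1 \<and> y1) \<noteq> (v2 \<and> y2))"
  by (simp add: dotp_Cons)

lemma split_list2: "length z = r+2 \<Longrightarrow> z = take r z @ [z!r, z!(r+1)]"
proof -
  assume l: "length z = r+2"
  have "drop r z = [z!r, z!(r+1)]"
    using l by (simp add: list_eq_iff_nth_eq nth_Cons less_2_cases_iff split: nat.splits)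
  thus ?thesis by (metis append_take_drop_id)
qed

lemma vecs_split: "vecs (r+2) = (\<lambda>(x,y1,y2). x @ [y1,y2]) ` (vecs r \<times> UNIV \<times> UNIV)"
proof (rule set_eqI, rule iffI)
  fix z assume "z \<in> vecs (r+2)"
  hence l: "length z = r+2" by (simp add: vecs_def)
  show "z \<in> (\<lambda>(x,y1,y2). x @ [y1,y2]) ` (vecs r \<times> UNIV \<times> UNIV)"
    apply (rule image_eqI[where x="(take r z, z!r, z!(r+1))"])
    using l split_list2[OF l] by (auto simp: vecs_def)
qed (auto simp: vecs_def)

lemma inj_split: "inj_on (\<lambda>(x,y1,y2). x @ [y1,y2]) (vecs r \<times> UNIV \<times> UNIV)"
  by (auto simp: inj_on_def vecs_def)
lemma inner_sum:
  fixes A G D v1 v2 :: bool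
  shows "(\<Sum>(y1,y2)\<in>(UNIV::bool set) \<times> (UNIV::bool set). (-1::int) ^ (if (A \<noteq> ((G \<noteq> y1) \<and> (G \<noteq> y2))) \<noteq> (D \<noteq> ((v1 \<and> y1) \<noteq> (v2 \<and> y2))) then 1 else 0))
   = (if v1 = v2 then 2 * (if v1 then -1 else 1) * (-1) ^ (if A \<noteq> D then 1 else 0) else 2 * (-1) ^ (if (A \<noteq> G) \<noteq> D then 1 else 0))"
  by (cases A; cases G; cases D; cases v1; cases v2; simp add: UNIV_bool)

lemma walsh_frakf:
  assumes l: "length w = r+2"
  shows "walsh (r+2) (frakf r a g) w = (if w!r = w!(r+1) then 2 * (if w!r then -1 else 1) * walsh r a (take r w)
          else 2 * walsh r (\<lambda>x. a x \<noteq> g x) (take r w))"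
proof -
  define u where "u = take r w"
  define v1 where "v1 = w!r"
  define v2 where "v2 = w!(r+1)"
  have w: "w = u @ [v1,v2]" using split_list2[OF l] u_def v1_def v2_def by simp
  have lu: "length u = r" using l u_def by simp
  let ?h = "\<lambda>z. (-1::int) ^ (if frakf r a g z \<noteq> dotp w z then 1 else 0)"
  have "walsh (r+2) (frakf r a g) w = (\<Sum>z\<in>vecs (r+2). ?h z)" by (simp add: walsh_def)
  also have "\<dots> = (\<Sum>p\<in>vecs r \<times> UNIV \<times> UNIV. ?h ((\<lambda>(x,y1,y2). x @ [y1,y2]) p))"
    unfolding vecs_split by (rule sum.reindex[OF inj_split, unfolded comp_def])
  also have "\<dots> = (\<Sum>x\<in>vecs r. \<Sum>q\<in>UNIV \<times> UNIV. ?h (x @ [fst q, snd q]))"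
    by (subst sum.cartesian_product) (simp add: case_prod_beta)
  also have "\<dots> = (\<Sum>x\<in>vecs r. (if v1 = v2 then 2 * (if v1 then -1 else 1) * (-1) ^ (if a x \<noteq> dotp u x then 1 else 0) else 2 * (-1) ^ (if (a x \<noteq> g x) \<noteq> dotp u x then 1 else 0)))"
  proof (rule sum.cong[OF refl])
    fix x assume "x \<in> vecs r"
    hence lx: "length x = r" by (simp add: vecs_def)
    have "(\<Sum>q\<in>(UNIV::bool set) \<times> (UNIV::bool set). ?h (x @ [fst q, snd q]))
       = (\<Sum>(y1,y2)\<in>(UNIV::bool set) \<times> (UNIV::bool set). (-1::int) ^ (if (a x \<noteq> ((g x \<noteq> y1) \<and> (g x \<noteq> y2))) \<noteq> (dotp u x \<noteq> ((v1 \<and> y1) \<noteq> (v2 \<and> y2))) then 1 else 0))"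
      proof (rule sum.cong[OF refl])
        fix q :: "bool \<times> bool" obtain y1 y2 where q: "q = (y1,y2)" by (cases q)
        have t: "take r (x @ [y1,y2]) = x" "(x @ [y1,y2]) ! r = y1" "(x @ [y1,y2]) ! (r+1) = y2"
          using lx by (simp_all add: nth_append)
        show "?h (x @ [fst q, snd q]) = (case q of (y1,y2) \<Rightarrow> (-1::int) ^ (if (a x \<noteq> ((g x \<noteq> y1) \<and> (g x \<noteq> y2))) \<noteq> (dotp u x \<noteq> ((v1 \<and> y1) \<noteq> (v2 \<and> y2))) then 1 else 0))"
          unfolding q frakf_def w by (simp only: t fst_conv snd_conv prod.case dotp_append[OF lu[folded lx]] dotp_two)
      qed
    also have "\<dots> = (if v1 = v2 then 2 * (if v1 then -1 else 1) * (-1) ^ (if a x \<noteq> dotp u x then 1 else 0) else 2 * (-1) ^ (if (a x \<noteq> g x) \<noteq> dotp u x then 1 else 0))"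
      by (rule inner_sum)
    finally show "(\<Sum>q\<in>UNIV \<times> UNIV. ?h (x @ [fst q, snd q])) = (if v1 = v2 then 2 * (if v1 then -1 else 1) * (-1) ^ (if a x \<noteq> dotp u x then 1 else 0) else 2 * (-1) ^ (if (a x \<noteq> g x) \<noteq> dotp u x then 1 else 0))" .
  qed
  also have "\<dots> = (if v1 = v2 then 2 * (if v1 then -1 else 1) * walsh r a u else 2 * walsh r (\<lambda>x. a x \<noteq> g x) u)"
    by (simp add: walsh_def sum_distrib_left)
  finally show ?thesis using u_def v1_def v2_def by simp
qed
lemma key:
  fixes X Y W P :: int and b c :: bool
  assumes "P > 0" "\<bar>X\<bar> = P" "Y \<in> {0, 2*P, -(2*P)}"
    "W = (if b = c then 2 * (if b then -1 else 1) * X else 2 * Y)"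
  shows "W \<in> {0, 2*P, -(2*P), 4*P, -(4*P)} \<and> (\<bar>W\<bar> = 4*P \<longrightarrow> b \<noteq> c \<and> Y \<noteq> 0)
     \<and> (\<bar>W\<bar> = 2*P \<longleftrightarrow> b = c) \<and> (b = c \<longrightarrow> (W = -(2*P) \<longleftrightarrow> (b \<noteq> (X = -P))))"
proof -
  have X: "X = P \<or> X = -P" using assms(2) by linarith
  show ?thesis using X assms(1,3,4) by (cases b; cases c) auto
qed

theorem mainTheorem7:
  fixes r n :: nat and a g :: "nat \<Rightarrow> bool list \<Rightarrow> bool"
  assumes "r \<ge> 4" and "even r" and "n = r + 2"
    and "\<forall>i\<in>{1..4}. bent r (a i)"
    and "\<forall>u\<in>vecs r. ((bent_dual r (a 1) u \<noteq> bent_dual r (a 2) u)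
                        \<noteq> (bent_dual r (a 3) u \<noteq> bent_dual r (a 4) u))"
    and "\<forall>i\<in>{1..4}. semibent r (\<lambda>x. a i x \<noteq> g i x)"
    and "\<forall>i\<in>{1..4}. \<forall>j\<in>{1..4}. i \<noteq> j \<longrightarrow>
           wsupp r (\<lambda>x. a i x \<noteq> g i x) \<inter> wsupp r (\<lambda>x. a j x \<noteq> g j x) = {}"
  shows "(\<forall>i\<in>{1..4}. \<forall>w\<in>vecs n. walsh n (frakf r (a i) (g i)) w \<in>
             {0, 2 ^ (n div 2), - (2 ^ (n div 2)), 2 ^ ((n + 2) div 2), - (2 ^ ((n + 2) div 2))})
       \<and> (\<forall>i\<in>{1..4}. \<forall>j\<in>{1..4}. i \<noteq> j \<longrightarrow>
             S1 n (frakf r (a i) (g i)) \<inter> S1 n (frakf r (a j) (g j)) = {})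
       \<and> (\<exists>S. (\<forall>i\<in>{1..4}. S2 n (frakf r (a i) (g i)) = S)
             \<and> (\<forall>w\<in>S. ((dual2 n (frakf r (a 1) (g 1)) w \<noteq> dual2 n (frakf r (a 2) (g 2)) w)
                      \<noteq> (dual2 n (frakf r (a 3) (g 3)) w \<noteq> dual2 n (frakf r (a 4) (g 4)) w))))"
proof -
  define m where "m = r div 2"
  define P :: int where "P = 2 ^ m"
  have P0: "P > 0" by (simp add: P_def)
  have nd: "(2::int) ^ (n div 2) = 2 * P" "(2::int) ^ ((n+2) div 2) = 4 * P"
    "(2::int) ^ ((r+2) div 2) = 2 * P" "(2::int) ^ (r div 2) = P"
    using assms(2,3) by (auto simp: P_def m_def power_Suc elim!: evenE)
  have K: "walsh n (frakf r (a i) (g i)) w \<in> {0, 2*P, -(2*P), 4*P, -(4*P)}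
     \<and> (\<bar>walsh n (frakf r (a i) (g i)) w\<bar> = 4*P \<longrightarrow> w!r \<noteq> w!(r+1) \<and> walsh r (\<lambda>x. a i x \<noteq> g i x) (take r w) \<noteq> 0)
     \<and> (\<bar>walsh n (frakf r (a i) (g i)) w\<bar> = 2*P \<longleftrightarrow> w!r = w!(r+1))
     \<and> (w!r = w!(r+1) \<longrightarrow> (walsh n (frakf r (a i) (g i)) w = -(2*P) \<longleftrightarrow> (w!r \<noteq> bent_dual r (a i) (take r w))))"
    if i: "i \<in> {1..4}" and w: "w \<in> vecs n" for i w
  proof -
    have lw: "length w = r+2" using w assms(3) by (simp add: vecs_def)
    have u: "take r w \<in> vecs r" using lw by (simp add: vecs_def)
    have X: "\<bar>walsh r (a i) (take r w)\<bar> = P" using assms(4) i u nd by (auto simp: bent_def)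
    have Y: "walsh r (\<lambda>x. a i x \<noteq> g i x) (take r w) \<in> {0, 2*P, -(2*P)}"
      using assms(6) i u nd by (auto simp: semibent_def)
    have W: "walsh n (frakf r (a i) (g i)) w = (if w!r = w!(r+1) then 2 * (if w!r then -1 else 1) * walsh r (a i) (take r w)
          else 2 * walsh r (\<lambda>x. a i x \<noteq> g i x) (take r w))"
      using walsh_frakf[OF lw] assms(3) by simp
    show ?thesis using key[OF P0 X Y W] nd by (simp add: bent_dual_def)
  qed
  have part1: "\<forall>i\<in>{1..4}. \<forall>w\<in>vecs n. walsh n (frakf r (a i) (g i)) w \<in>
             {0, 2 ^ (n div 2), - (2 ^ (n div 2)), 2 ^ ((n + 2) div 2), - (2 ^ ((n + 2) div 2))}"
    unfolding nd using K by blast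
  have part2: "\<forall>i\<in>{1..4}. \<forall>j\<in>{1..4}. i \<noteq> j \<longrightarrow>
             S1 n (frakf r (a i) (g i)) \<inter> S1 n (frakf r (a j) (g j)) = {}"
  proof (intro ballI impI)
    fix i j :: nat assume i: "i \<in> {1..4}" and j: "j \<in> {1..4}" and ij: "i \<noteq> j"
    show "S1 n (frakf r (a i) (g i)) \<inter> S1 n (frakf r (a j) (g j)) = {}"
    proof (rule ccontr)
      assume "S1 n (frakf r (a i) (g i)) \<inter> S1 n (frakf r (a j) (g j)) \<noteq> {}"
      then obtain w where w: "w \<in> vecs n" "\<bar>walsh n (frakf r (a i) (g i)) w\<bar> = 4*P"
        "\<bar>walsh n (frakf r (a j) (g j)) w\<bar> = 4*P" unfolding S1_def nd by auto
      have u: "take r w \<in> vecs r" using w(1) assms(3) by (simp add: vecs_def)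
      have "take r w \<in> wsupp r (\<lambda>x. a i x \<noteq> g i x)" "take r w \<in> wsupp r (\<lambda>x. a j x \<noteq> g j x)"
        using K[OF i w(1)] K[OF j w(1)] w u by (auto simp: wsupp_def)
      thus False using assms(7) i j ij by blast
    qed
  qed
  define S where "S = {w \<in> vecs n. w!r = w!(r+1)}"
  have part3a: "\<forall>i\<in>{1..4}. S2 n (frakf r (a i) (g i)) = S"
    using K unfolding S2_def S_def nd by blast
  have part3b: "\<forall>w\<in>S. ((dual2 n (frakf r (a 1) (g 1)) w \<noteq> dual2 n (frakf r (a 2) (g 2)) w)
                      \<noteq> (dual2 n (frakf r (a 3) (g 3)) w \<noteq> dual2 n (frakf r (a 4) (g 4)) w))"
  proof
    fix w assume w: "w \<in> S"
    hence wv: "w \<in> vecs n" and e: "w!r = w!(r+1)" by (auto simp: S_def)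
    have u: "take r w \<in> vecs r" using wv assms(3) by (simp add: vecs_def)
    have d: "dual2 n (frakf r (a i) (g i)) w \<longleftrightarrow> (w!r \<noteq> bent_dual r (a i) (take r w))"
      if "i \<in> {1..4}" for i using K[OF that wv] e by (simp add: dual2_def nd)
    show "((dual2 n (frakf r (a 1) (g 1)) w \<noteq> dual2 n (frakf r (a 2) (g 2)) w)
                      \<noteq> (dual2 n (frakf r (a 3) (g 3)) w \<noteq> dual2 n (frakf r (a 4) (g 4)) w))"
      using d[of 1] d[of 2] d[of 3] d[of 4] assms(5) u by auto
  qed
  show ?thesis using part1 part2 part3a part3b by blast
qed
end
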